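(* Let $l>0$ and for $\rho\in[-1,1]$ let $h(\rho)=\mathbb{E}\big(1\wedge e^{-lZ_1-l^2/2}\wedge e^{-lZ_2-l^2/2}\big)$ with $(Z_1,Z_2)\sim\mathrm{BVN}(\rho)$. Then $\partial_\rho h(\rho)>0$ for all $\rho\in(-1,1)$ and $\lim_{\rho\nearrow1}\partial_\rho h(\rho)=\infty$; and $\partial_\rho^2h(\rho)>0$ for all $\rho\in[0,1)$.
   Context: $\mathrm{BVN}(\rho)$ denotes the bivariate normal distribution with zero means, unit variances and correlation $\rho$. *)

theory Defs
  imports "HOL-Probability.Probability"
begin

definition std_normal :: "real measure" where
  "std_normal = density lborel std_normal_density"

text \<open>Bivariate normal BVN(rho): zero means, unit variances, correlation rho,
  for rho in [-1,1], realised as the law of (Z, rho Z + sqrt(1-rho^2) W)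
  with Z, W independent standard normals (this also covers rho = +-1).\<close>
definition BVN :: "real \<Rightarrow> (real \<times> real) measure" where
  "BVN \<rho> = distr (std_normal \<Otimes>\<^sub>M std_normal) borel
      (\<lambda>(z, w). (z, \<rho> * z + sqrt (1 - \<rho>\<^sup>2) * w))"

definition hfun :: "real \<Rightarrow> real \<Rightarrow> real" where
  "hfun l \<rho> = (\<integral>(z1, z2). min 1 (min (exp (- l * z1 - l\<^sup>2 / 2)) (exp (- l * z2 - l\<^sup>2 / 2))) \<partial>BVN \<rho>)"

end

theory Submission
  imports Defs
begin


lemma diff_under:
  fixes f f' :: "real \<Rightarrow> real \<Rightarrow> real" and g :: "real \<Rightarrow> real"
  assumes ab: "a < r0" "r0 < b"
  and int: "\<And>r. a < r \<Longrightarrow> r < b \<Longrightarrow> integrable lborel (f r)"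
  and der: "\<And>x r. a < r \<Longrightarrow> r < b \<Longrightarrow> ((\<lambda>r. f r x) has_real_derivative f' r x) (at r)"
  and bnd: "\<And>x r. a < r \<Longrightarrow> r < b \<Longrightarrow> \<bar>f' r x\<bar> \<le> g x"
  and intg: "integrable lborel g"
  and meas: "f' r0 \<in> borel_measurable lborel"
  shows "((\<lambda>r. \<integral>x. f r x \<partial>lborel) has_real_derivative (\<integral>x. f' r0 x \<partial>lborel)) (at r0)"
proof -
  have "((\<lambda>r. \<integral>x. f r x \<partial>lborel) has_real_derivative (\<integral>x. f' r0 x \<partial>lborel)) (at r0 within {a<..<b})"
    unfolding has_field_derivative_iff tendsto_at_iff_sequentially
  proof (intro allI impI)
    fix X :: "nat \<Rightarrow> real"
    assume X: "\<forall>i. X i \<in> {a<..<b} - {r0}" and Xl: "X \<longlonglongrightarrow> r0"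
    define s where "s i x = (f (X i) x - f r0 x) / (X i - r0)" for i x
    have eq: "((\<integral>x. f (X i) x \<partial>lborel) - (\<integral>x. f r0 x \<partial>lborel)) / (X i - r0) = (\<integral>x. s i x \<partial>lborel)" for i
    proof -
      have "integrable lborel (f (X i))" using X int by auto
      moreover have "integrable lborel (f r0)" using ab int by auto
      ultimately show ?thesis unfolding s_def by (simp add: integral_diff)
    qed
    have "(\<lambda>i. \<integral>x. s i x \<partial>lborel) \<longlonglongrightarrow> (\<integral>x. f' r0 x \<partial>lborel)"
    proof (rule integral_dominated_convergence[where w=g])
      show "f' r0 \<in> borel_measurable lborel" by (rule meas)
      show "s i \<in> borel_measurable lborel" for i
      proof -
        have "integrable lborel (f (X i))" using X int by auto
        moreover have "integrable lborel (f r0)" using ab int by auto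
        ultimately show ?thesis unfolding s_def by auto
      qed
      show "integrable lborel g" by (rule intg)
      show "AE x in lborel. (\<lambda>i. s i x) \<longlonglongrightarrow> f' r0 x"
      proof (rule AE_I2)
        fix x
        have "((\<lambda>y. (f y x - f r0 x) / (y - r0)) \<longlongrightarrow> f' r0 x) (at r0)"
          using der[OF ab, of x] unfolding has_field_derivative_iff .
        then have "((\<lambda>y. (f y x - f r0 x) / (y - r0)) \<circ> X) \<longlonglongrightarrow> f' r0 x"
          unfolding tendsto_at_iff_sequentially using X Xl by auto
        then show "(\<lambda>i. s i x) \<longlonglongrightarrow> f' r0 x" unfolding s_def comp_def .
      qed
      show "AE x in lborel. norm (s i x) \<le> g x" for i
      proof (rule AE_I2)
        fix x
        have Xi: "a < X i" "X i < b" "X i \<noteq> r0" using X by auto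
        show "norm (s i x) \<le> g x"
        proof (cases "X i < r0")
          case True
          obtain z where z: "X i < z" "z < r0" "f r0 x - f (X i) x = (r0 - X i) * f' z x"
            using MVT2[OF True, of "\<lambda>r. f r x" "\<lambda>r. f' r x"] der Xi ab by fastforce
          have "s i x = f' z x" unfolding s_def using z True
            by (simp add: field_simps)
          then show ?thesis using bnd[of z x] z Xi ab by simp
        next
          case False
          then have F: "r0 < X i" using Xi by auto
          obtain z where z: "r0 < z" "z < X i" "f (X i) x - f r0 x = (X i - r0) * f' z x"
            using MVT2[OF F, of "\<lambda>r. f r x" "\<lambda>r. f' r x"] der Xi ab by fastforce
          have "s i x = f' z x" unfolding s_def using z F
            by (simp add: field_simps)
          then show ?thesis using bnd[of z x] z Xi ab by simp
        qed
      qed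
    qed
    then show "((\<lambda>y. ((\<integral>x. f y x \<partial>lborel) - (\<integral>x. f r0 x \<partial>lborel)) / (y - r0)) \<circ> X) \<longlonglongrightarrow> (\<integral>x. f' r0 x \<partial>lborel)"
      unfolding comp_def eq .
  qed
  moreover have "at r0 within {a<..<b} = at r0" using ab by (intro at_within_open) auto
  ultimately show ?thesis by simp
qed



abbreviation "phi \<equiv> std_normal_density"

definition Phi :: "real \<Rightarrow> real" where
  "Phi x = (\<integral>w. phi w * indicator {..x} w \<partial>lborel)"

lemma integrable_phi_ind[simp]: "integrable lborel (\<lambda>w. phi w * indicator A w)" if "A \<in> sets borel"
  using that by (intro integrable_real_mult_indicator) auto

lemma Phi_split: "Phi y = Phi 0 + (LBINT w=0..y. phi w)"
proof (cases "0 \<le> y")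
  case True
  have "Phi y = (\<integral>w. phi w * indicator {..0} w + phi w * indicator {0<..y} w \<partial>lborel)"
    unfolding Phi_def using True
    by (intro Bochner_Integration.integral_cong) (auto split: split_indicator)
  also have "\<dots> = Phi 0 + (\<integral>w. phi w * indicator {0<..y} w \<partial>lborel)"
    unfolding Phi_def by (intro Bochner_Integration.integral_add) auto
  also have "(\<integral>w. phi w * indicator {0<..y} w \<partial>lborel) = (LBINT w=ereal 0..ereal y. phi w)"
    by (subst interval_integral_Ioc) (use True in \<open>auto simp: set_lebesgue_integral_def mult.commute\<close>)
  finally show ?thesis unfolding zero_ereal_def .
next
  case False
  have "Phi 0 = (\<integral>w. phi w * indicator {..y} w + phi w * indicator {y<..0} w \<partial>lborel)"
    unfolding Phi_def using False
    by (intro Bochner_Integration.integral_cong) (auto split: split_indicator)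
  also have "\<dots> = Phi y + (\<integral>w. phi w * indicator {y<..0} w \<partial>lborel)"
    unfolding Phi_def by (intro Bochner_Integration.integral_add) auto
  also have "(\<integral>w. phi w * indicator {y<..0} w \<partial>lborel) = (LBINT w=ereal y..ereal 0. phi w)"
    by (subst interval_integral_Ioc) (use False in \<open>auto simp: set_lebesgue_integral_def mult.commute\<close>)
  finally show ?thesis
    unfolding zero_ereal_def using interval_integral_endpoints_reverse[of "ereal 0" "ereal y" phi] by simp
qed

lemma Phi_deriv: "(Phi has_real_derivative phi x) (at x)"
proof -
  define a where "a = - \<bar>x\<bar> - 1"
  define b where "b = \<bar>x\<bar> + 1"
  have cont: "continuous_on {a..b} phi"
    unfolding normal_density_def by (intro continuous_intros) auto
  have "((\<lambda>u. LBINT w=0..u. phi w) has_vector_derivative phi x) (at x within {a..b})"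
    using interval_integral_FTC2[OF _ _ cont, of 0 x] unfolding zero_ereal_def by (auto simp: a_def b_def)
  moreover have "at x within {a..b} = at x"
    by (rule at_within_interior) (auto simp: a_def b_def)
  ultimately have "((\<lambda>u. LBINT w=0..u. phi w) has_real_derivative phi x) (at x)"
    by (simp add: has_real_derivative_iff_has_vector_derivative)
  then have "((\<lambda>u. Phi 0 + (LBINT w=0..u. phi w)) has_real_derivative phi x) (at x)"
    by (auto intro!: derivative_eq_intros)
  then show ?thesis by (simp add: Phi_split[symmetric])
qed

lemma Phi_cont: "isCont Phi x"
  using Phi_deriv DERIV_isCont by blast

lemma Phi_measurable[measurable]: "Phi \<in> borel_measurable borel"
  by (intro borel_measurable_continuous_onI continuous_at_imp_continuous_on) (auto intro: Phi_cont)

lemma Phi_nonneg: "0 \<le> Phi x"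
  unfolding Phi_def by (intro integral_nonneg_AE) (auto)

lemma Phi_le1: "Phi x \<le> 1"
proof -
  have "Phi x \<le> (\<integral>w. phi w \<partial>lborel)"
    unfolding Phi_def by (intro integral_mono) (auto split: split_indicator)
  then show ?thesis by simp
qed

lemma Phi_nn: "(\<integral>\<^sup>+w. ennreal (phi w * indicator {..x} w) \<partial>lborel) = ennreal (Phi x)"
  unfolding Phi_def by (intro nn_integral_eq_integral) auto



lemma exp_tail_lim:
  assumes "(l::real) > 0"
  shows "((\<lambda>x. - exp (- l * x - l\<^sup>2 / 2)) \<longlongrightarrow> 0) at_top"
  using assms by real_asymp

lemma exp_tail_nn:
  assumes l: "(l::real) > 0"
  shows "(\<integral>\<^sup>+t. ennreal (l * exp (- l * t - l\<^sup>2 / 2)) * indicator {m..} t \<partial>lborel) = ennreal (exp (- l * m - l\<^sup>2 / 2))"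
proof -
  have "(\<integral>\<^sup>+t. ennreal (l * exp (- l * t - l\<^sup>2 / 2)) * indicator {m..} t \<partial>lborel) =
     ennreal (0 - (- exp (- l * m - l\<^sup>2 / 2)))"
  proof (rule nn_integral_FTC_atLeast)
    show "(\<lambda>t. l * exp (- l * t - l\<^sup>2 / 2)) \<in> borel_measurable borel" by measurable
    show "((\<lambda>x. - exp (- l * x - l\<^sup>2 / 2)) has_real_derivative l * exp (- l * x - l\<^sup>2 / 2)) (at x)" for x
      by (auto intro!: derivative_eq_intros)
    show "0 \<le> l * exp (- l * x - l\<^sup>2 / 2)" for x using l by simp
  qed (rule exp_tail_lim[OF l])
  then show ?thesis by simp
qed

definition Wf :: "real \<Rightarrow> real \<Rightarrow> real" where
  "Wf l t = l * exp (- l * t - l\<^sup>2 / 2) * indicator {- l / 2..} t"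

lemma Wf_nonneg: "l > 0 \<Longrightarrow> 0 \<le> Wf l t"
  unfolding Wf_def by (auto split: split_indicator)

lemma Wf_meas[measurable]: "Wf l \<in> borel_measurable borel"
  unfolding Wf_def by measurable

lemma Wf_nn: assumes l: "l > 0"
  shows "(\<integral>\<^sup>+t. ennreal (Wf l t) \<partial>lborel) = ennreal 1"
proof -
  have "(\<integral>\<^sup>+t. ennreal (Wf l t) \<partial>lborel) = (\<integral>\<^sup>+t. ennreal (l * exp (- l * t - l\<^sup>2 / 2)) * indicator {- l / 2..} t \<partial>lborel)"
    unfolding Wf_def by (intro nn_integral_cong) (auto split: split_indicator)
  also have "\<dots> = ennreal (exp (- l * (- l / 2) - l\<^sup>2 / 2))" by (rule exp_tail_nn[OF l])
  also have "- l * (- l / 2) - l\<^sup>2 / 2 = 0" by (simp add: power2_eq_square)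
  finally show ?thesis by simp
qed

lemma Wf_integrable: "l > 0 \<Longrightarrow> integrable lborel (Wf l)"
  by (rule integrableI_nn_integral_finite[OF _ _ Wf_nn]) (auto simp: Wf_nonneg)

lemma min_exp_eq:
  assumes l: "(l::real) > 0"
  shows "min 1 (min (exp (- l * z - l\<^sup>2 / 2)) (exp (- l * y - l\<^sup>2 / 2))) = exp (- l * max (max z y) (- l / 2) - l\<^sup>2 / 2)"
proof -
  have one: "1 = exp (- l * (- l / 2) - l\<^sup>2 / 2)" by (simp add: power2_eq_square)
  have mono: "a \<le> b \<Longrightarrow> exp (- l * b - l\<^sup>2 / 2) \<le> exp (- l * a - l\<^sup>2 / 2)" for a b
    using l by (simp add: mult_left_mono)
  show ?thesis
    apply (subst one)
    using mono[of z y] mono[of y z] mono[of z "- l / 2"] mono[of "- l / 2" z] mono[of y "- l / 2"] mono[of "- l / 2" y]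
    by (auto simp: min_def max_def)
qed

lemma G_repr:
  assumes l: "(l::real) > 0"
  shows "ennreal (min 1 (min (exp (- l * z - l\<^sup>2 / 2)) (exp (- l * y - l\<^sup>2 / 2)))) =
    (\<integral>\<^sup>+t. ennreal (Wf l t * indicator {z..} t * indicator {y..} t) \<partial>lborel)"
proof -
  have "(\<integral>\<^sup>+t. ennreal (Wf l t * indicator {z..} t * indicator {y..} t) \<partial>lborel) =
     (\<integral>\<^sup>+t. ennreal (l * exp (- l * t - l\<^sup>2 / 2)) * indicator {max (max z y) (- l / 2)..} t \<partial>lborel)"
    unfolding Wf_def by (intro nn_integral_cong) (auto split: split_indicator)
  also have "\<dots> = ennreal (exp (- l * max (max z y) (- l / 2) - l\<^sup>2 / 2))" by (rule exp_tail_nn[OF l])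
  finally show ?thesis using min_exp_eq[OF l] by simp
qed



definition Fr :: "real \<Rightarrow> real \<Rightarrow> real" where
  "Fr \<rho> t = (\<integral>z. phi z * indicator {..t} z * Phi ((t - \<rho> * z) / sqrt (1 - \<rho>\<^sup>2)) \<partial>lborel)"

lemma meas_ind_atLeast[measurable (raw)]:
  fixes f g :: "'a \<Rightarrow> real"
  assumes [measurable]: "f \<in> borel_measurable M" "g \<in> borel_measurable M"
  shows "(\<lambda>x. indicator {f x..} (g x) :: real) \<in> borel_measurable M"
  unfolding indicator_def atLeast_iff by measurable

lemma meas_ind_atMost[measurable (raw)]:
  fixes f g :: "'a \<Rightarrow> real"
  assumes [measurable]: "f \<in> borel_measurable M" "g \<in> borel_measurable M"
  shows "(\<lambda>x. indicator {..f x} (g x) :: real) \<in> borel_measurable M"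
  unfolding indicator_def atMost_iff by measurable

lemma Phi_meas2[measurable (raw)]: "f \<in> borel_measurable M \<Longrightarrow> (\<lambda>x. Phi (f x)) \<in> borel_measurable M"
  using measurable_compose[OF _ Phi_measurable] by blast

lemma Fr_meas[measurable]: "Fr \<rho> \<in> borel_measurable borel"
  unfolding Fr_def indicator_def atMost_iff by measurable

lemma phi_Phi_le: "phi x * Phi y \<le> phi x"
  by (rule mult_left_le[OF Phi_le1]) simp

lemma Fr_integrand_integrable:
  "integrable lborel (\<lambda>z. phi z * indicator {..t} z * Phi ((t - \<rho> * z) / sqrt (1 - \<rho>\<^sup>2)))"
  apply (rule Bochner_Integration.integrable_bound[where f = phi])
    apply simp
   apply (unfold indicator_def atMost_iff, measurable)[1]
  apply (intro AE_I2)
  apply (auto simp: Phi_nonneg abs_mult phi_Phi_le split: split_indicator)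
  done

lemma Fr_nonneg: "0 \<le> Fr \<rho> t"
  unfolding Fr_def by (intro integral_nonneg_AE) (auto simp: Phi_nonneg)

lemma Fr_le1: "Fr \<rho> t \<le> 1"
proof -
  have "Fr \<rho> t \<le> (\<integral>z. phi z \<partial>lborel)"
    unfolding Fr_def
    by (intro integral_mono Fr_integrand_integrable)
       (auto simp: phi_Phi_le split: split_indicator)
  then show ?thesis by simp
qed

lemma WFr_integrable: "l > 0 \<Longrightarrow> integrable lborel (\<lambda>t. Wf l t * Fr \<rho> t)"
  apply (rule Bochner_Integration.integrable_bound[OF Wf_integrable])
    apply simp
   apply measurable
  apply (intro AE_I2)
  apply (auto simp: Wf_nonneg Fr_nonneg Fr_le1 abs_mult intro!: mult_left_le)
  done

lemma hfun_repr:
  assumes l: "l > 0" and r: "-1 < \<rho>" "\<rho> < 1"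
  shows "hfun l \<rho> = (\<integral>t. Wf l t * Fr \<rho> t \<partial>lborel)"
proof -
  define s where "s = sqrt (1 - \<rho>\<^sup>2)"
  have s: "s > 0" unfolding s_def using r by (simp add: abs_square_less_1)
  define E where "E z y = min 1 (min (exp (- l * z - l\<^sup>2 / 2)) (exp (- l * y - l\<^sup>2 / 2)))" for z y
  have E_meas[measurable]: "(\<lambda>(z, y). E z y) \<in> borel_measurable (borel \<Otimes>\<^sub>M borel)" unfolding E_def by measurable
  interpret N: prob_space std_normal unfolding std_normal_def by (rule prob_space_normal_density) simp
  have [measurable_cong]: "sets std_normal = sets borel" by (simp add: std_normal_def)
  have Tm: "(\<lambda>(z, w). (z, \<rho> * z + s * w)) \<in> measurable (std_normal \<Otimes>\<^sub>M std_normal) borel"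
  proof -
    have "(\<lambda>(z, w). (z, \<rho> * z + s * w)) \<in> measurable (std_normal \<Otimes>\<^sub>M std_normal) (borel \<Otimes>\<^sub>M borel)"
      by measurable
    then show ?thesis by (simp add: borel_prod)
  qed
  have fm: "(\<lambda>(z1, z2). E z1 z2) \<in> borel_measurable (borel :: (real \<times> real) measure)"
    using E_meas by (simp add: borel_prod)
  have E_meas'[measurable]: "(\<lambda>p. E (fst p) (snd p)) \<in> borel_measurable (borel \<Otimes>\<^sub>M borel)"
    using E_meas by (simp add: case_prod_beta)
  have "hfun l \<rho> = (\<integral>p. (\<lambda>(z1, z2). E z1 z2) ((\<lambda>(z, w). (z, \<rho> * z + s * w)) p) \<partial>(std_normal \<Otimes>\<^sub>M std_normal))"
    unfolding hfun_def BVN_def E_def[abs_def] s_def[symmetric]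
    by (rule integral_distr[OF Tm fm[unfolded E_def[abs_def]]])
  also have "\<dots> = (\<integral>p. E (fst p) (\<rho> * fst p + s * snd p) \<partial>(std_normal \<Otimes>\<^sub>M std_normal))"
    by (simp add: case_prod_beta)
  also have "\<dots> = enn2real (\<integral>\<^sup>+p. ennreal (E (fst p) (\<rho> * fst p + s * snd p)) \<partial>(std_normal \<Otimes>\<^sub>M std_normal))"
    by (rule integral_eq_nn_integral) (auto simp: E_def)
  also have "(\<integral>\<^sup>+p. ennreal (E (fst p) (\<rho> * fst p + s * snd p)) \<partial>(std_normal \<Otimes>\<^sub>M std_normal)) =
     (\<integral>\<^sup>+z. \<integral>\<^sup>+w. ennreal (E z (\<rho> * z + s * w)) \<partial>std_normal \<partial>std_normal)"
    by (subst N.nn_integral_fst[symmetric]) auto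
  also have "\<dots> = (\<integral>\<^sup>+z. ennreal (phi z) * (\<integral>\<^sup>+w. ennreal (phi w) * ennreal (E z (\<rho> * z + s * w)) \<partial>lborel) \<partial>lborel)"
    unfolding std_normal_def
    by (subst nn_integral_density; (auto intro!: nn_integral_cong simp: nn_integral_density)?)
  also have "\<dots> = (\<integral>\<^sup>+z. \<integral>\<^sup>+w. \<integral>\<^sup>+t. ennreal (phi z * phi w * Wf l t * indicator {z..} t * indicator {\<rho> * z + s * w..} t) \<partial>lborel \<partial>lborel \<partial>lborel)"
  proof (intro nn_integral_cong)
    fix z
    have "ennreal (phi z) * (\<integral>\<^sup>+w. ennreal (phi w) * ennreal (E z (\<rho> * z + s * w)) \<partial>lborel) =
      ennreal (phi z) * (\<integral>\<^sup>+w. \<integral>\<^sup>+t. ennreal (phi w) * ennreal (Wf l t * indicator {z..} t * indicator {\<rho> * z + s * w..} t) \<partial>lborel \<partial>lborel)"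
      unfolding E_def G_repr[OF l] by (subst nn_integral_cmult) auto
    also have "\<dots> = (\<integral>\<^sup>+w. \<integral>\<^sup>+t. ennreal (phi z) * (ennreal (phi w) * ennreal (Wf l t * indicator {z..} t * indicator {\<rho> * z + s * w..} t)) \<partial>lborel \<partial>lborel)"
      by (subst nn_integral_cmult[symmetric]; (auto intro!: nn_integral_cong simp: nn_integral_cmult)?)
    also have "\<dots> = (\<integral>\<^sup>+w. \<integral>\<^sup>+t. ennreal (phi z * phi w * Wf l t * indicator {z..} t * indicator {\<rho> * z + s * w..} t) \<partial>lborel \<partial>lborel)"
      by (intro nn_integral_cong) (auto simp: ennreal_mult[symmetric] Wf_nonneg[OF l] mult.assoc)
    finally show "ennreal (phi z) * (\<integral>\<^sup>+w. ennreal (phi w) * ennreal (E z (\<rho> * z + s * w)) \<partial>lborel) = \<dots>" .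
  qed
  also have "\<dots> = (\<integral>\<^sup>+z. \<integral>\<^sup>+t. \<integral>\<^sup>+w. ennreal (phi z * phi w * Wf l t * indicator {z..} t * indicator {\<rho> * z + s * w..} t) \<partial>lborel \<partial>lborel \<partial>lborel)"
  proof (rule nn_integral_cong)
    fix z
    let ?G = "\<lambda>t w. ennreal (phi z * phi w * Wf l t * indicator {z..} t * indicator {\<rho> * z + s * w..} t)"
    have "case_prod ?G \<in> borel_measurable (lborel \<Otimes>\<^sub>M lborel)" by measurable
    from lborel_pair.Fubini'[OF this]
    show "(\<integral>\<^sup>+w. \<integral>\<^sup>+t. ?G t w \<partial>lborel \<partial>lborel) = (\<integral>\<^sup>+t. \<integral>\<^sup>+w. ?G t w \<partial>lborel \<partial>lborel)" .
  qed
  also have "\<dots> = (\<integral>\<^sup>+t. \<integral>\<^sup>+z. \<integral>\<^sup>+w. ennreal (phi z * phi w * Wf l t * indicator {z..} t * indicator {\<rho> * z + s * w..} t) \<partial>lborel \<partial>lborel \<partial>lborel)"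
    by (subst lborel_pair.Fubini') (auto, measurable)
  also have "\<dots> = (\<integral>\<^sup>+t. \<integral>\<^sup>+z. ennreal (Wf l t) * ennreal (phi z * indicator {..t} z * Phi ((t - \<rho> * z) / s)) \<partial>lborel \<partial>lborel)"
  proof (intro nn_integral_cong)
    fix t z
    have ind: "indicator {\<rho> * z + s * w..} t = (indicator {..(t - \<rho> * z) / s} w :: real)" for w
      using s by (auto simp: indicator_def field_simps)
    have "(\<integral>\<^sup>+w. ennreal (phi z * phi w * Wf l t * indicator {z..} t * indicator {\<rho> * z + s * w..} t) \<partial>lborel)
      = (\<integral>\<^sup>+w. ennreal (Wf l t * phi z * indicator {..t} z) * ennreal (phi w * indicator {..(t - \<rho> * z) / s} w) \<partial>lborel)"
      unfolding ind
      by (intro nn_integral_cong) (auto simp: ennreal_mult[symmetric] Wf_nonneg[OF l] mult_ac split: split_indicator)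
    also have "\<dots> = ennreal (Wf l t * phi z * indicator {..t} z) * ennreal (Phi ((t - \<rho> * z) / s))"
      by (subst nn_integral_cmult) (auto simp: Phi_nn)
    also have "\<dots> = ennreal (Wf l t) * ennreal (phi z * indicator {..t} z * Phi ((t - \<rho> * z) / s))"
      by (simp add: ennreal_mult[symmetric] Wf_nonneg[OF l] Phi_nonneg mult_ac)
    finally show "(\<integral>\<^sup>+w. ennreal (phi z * phi w * Wf l t * indicator {z..} t * indicator {\<rho> * z + s * w..} t) \<partial>lborel) = \<dots>" .
  qed
  also have "\<dots> = (\<integral>\<^sup>+t. ennreal (Wf l t * Fr \<rho> t) \<partial>lborel)"
  proof (intro nn_integral_cong)
    fix t
    have "(\<integral>\<^sup>+z. ennreal (Wf l t) * ennreal (phi z * indicator {..t} z * Phi ((t - \<rho> * z) / s)) \<partial>lborel)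
       = ennreal (Wf l t) * (\<integral>\<^sup>+z. ennreal (phi z * indicator {..t} z * Phi ((t - \<rho> * z) / s)) \<partial>lborel)"
      by (subst nn_integral_cmult) (auto, measurable)
    also have "(\<integral>\<^sup>+z. ennreal (phi z * indicator {..t} z * Phi ((t - \<rho> * z) / s)) \<partial>lborel) = ennreal (Fr \<rho> t)"
      unfolding Fr_def s_def
      by (rule nn_integral_eq_integral[OF Fr_integrand_integrable]) (auto simp: Phi_nonneg)
    finally show "(\<integral>\<^sup>+z. ennreal (Wf l t) * ennreal (phi z * indicator {..t} z * Phi ((t - \<rho> * z) / s)) \<partial>lborel) = ennreal (Wf l t * Fr \<rho> t)"
      by (simp add: ennreal_mult[symmetric] Wf_nonneg[OF l] Fr_nonneg)
  qed
  also have "\<dots> = ennreal (\<integral>t. Wf l t * Fr \<rho> t \<partial>lborel)"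
    by (rule nn_integral_eq_integral[OF WFr_integrable[OF l]]) (auto simp: Wf_nonneg[OF l] Fr_nonneg)
  finally show ?thesis
    by (simp add: integral_nonneg_AE Wf_nonneg[OF l] Fr_nonneg)
qed



lemma deriv_arg:
  assumes r: "-1 < r" "r < 1"
  shows "((\<lambda>r. (t - r * z) / sqrt (1 - r\<^sup>2)) has_real_derivative (r * t - z) / sqrt (1 - r\<^sup>2) ^ 3) (at r)"
proof -
  have p: "0 < 1 - r\<^sup>2" using r by (simp add: abs_square_less_1)
  have sq: "sqrt (1 - r\<^sup>2) ^ 2 = 1 - r\<^sup>2" using p by simp
  have sp: "sqrt (1 - r\<^sup>2) > 0" using p by simp
  have "((\<lambda>r. (t - r * z) / sqrt (1 - r\<^sup>2)) has_real_derivative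
     ((- z) * sqrt (1 - r\<^sup>2) - (t - r * z) * (inverse (sqrt (1 - r\<^sup>2)) / 2 * (- (2 * r)))) / (sqrt (1 - r\<^sup>2) * sqrt (1 - r\<^sup>2))) (at r)"
    using p sp
    by (intro DERIV_divide DERIV_diff DERIV_const DERIV_cmult DERIV_real_sqrt derivative_intros) (auto intro!: derivative_eq_intros)
  moreover have "((- z) * sqrt (1 - r\<^sup>2) - (t - r * z) * (inverse (sqrt (1 - r\<^sup>2)) / 2 * (- (2 * r)))) / (sqrt (1 - r\<^sup>2) * sqrt (1 - r\<^sup>2))
     = (r * t - z) / sqrt (1 - r\<^sup>2) ^ 3"
  proof -
    define q where "q = sqrt (1 - r\<^sup>2)"
    have q2: "q * q = 1 - r\<^sup>2" unfolding q_def using p by (simp flip: power2_eq_square)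
    have qp: "q > 0" unfolding q_def using sp .
    have "((- z) * q - (t - r * z) * (inverse q / 2 * (- (2 * r)))) / (q * q) = ((- z) * (q * q) + (t - r * z) * r) / (q * q * q)"
      using qp by (simp add: field_simps)
    also have "(- z) * (q * q) + (t - r * z) * r = r * t - z" unfolding q2 by (simp add: power2_eq_square algebra_simps)
    also have "(r * t - z) / (q * q * q) = (r * t - z) / q ^ 3" by (simp add: power3_eq_cube)
    finally show ?thesis unfolding q_def .
  qed
  ultimately show ?thesis by simp
qed

lemma H_lim_bot:
  fixes \<sigma> \<mu> :: real
  assumes "\<sigma> > 0"
  shows "((\<lambda>z. exp (- (z - \<mu>)\<^sup>2 / (2 * \<sigma>\<^sup>2))) \<longlongrightarrow> 0) at_bot"
  using assms by real_asymp

lemma H_FTC: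
  fixes \<sigma> \<mu> t :: real
  assumes sp: "\<sigma> > 0"
  shows "(\<integral>z. indicator {..t} z * ((\<mu> - z) / \<sigma>\<^sup>2 * exp (- (z - \<mu>)\<^sup>2 / (2 * \<sigma>\<^sup>2))) \<partial>lborel)
     = exp (- (t - \<mu>)\<^sup>2 / (2 * \<sigma>\<^sup>2))"
proof -
  define H where "H z = exp (- (z - \<mu>)\<^sup>2 / (2 * \<sigma>\<^sup>2))" for z
  define h where "h z = (\<mu> - z) / \<sigma>\<^sup>2 * exp (- (z - \<mu>)\<^sup>2 / (2 * \<sigma>\<^sup>2))" for z
  have hm[measurable]: "h \<in> borel_measurable borel" unfolding h_def by measurable
  have der: "(H has_real_derivative h z) (at z)" for z
  proof -
    have "(H has_real_derivative exp (- (z - \<mu>)\<^sup>2 / (2 * \<sigma>\<^sup>2)) * (- (2 * (z - \<mu>)) / (2 * \<sigma>\<^sup>2))) (at z)"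
      unfolding H_def using sp by (auto intro!: derivative_eq_intros simp: power2_eq_square algebra_simps divide_simps)
    moreover have "exp (- (z - \<mu>)\<^sup>2 / (2 * \<sigma>\<^sup>2)) * (- (2 * (z - \<mu>)) / (2 * \<sigma>\<^sup>2)) = h z"
      unfolding h_def using sp by (simp add: field_simps)
    ultimately show ?thesis by simp
  qed
  have hb: "integrable lborel (\<lambda>x. sqrt (2 * pi * \<sigma>\<^sup>2) / \<sigma>\<^sup>2 * (normal_density \<mu> \<sigma> x * \<bar>x - \<mu>\<bar> ^ 1))"
    using integrable_normal_moment_abs[of \<sigma> \<mu> 1] sp by (intro integrable_mult_right) auto
  have hint: "integrable lborel h"
  proof (rule Bochner_Integration.integrable_bound[OF hb])
    show "h \<in> borel_measurable lborel" by simp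
    show "AE x in lborel. norm (h x) \<le> norm (sqrt (2 * pi * \<sigma>\<^sup>2) / \<sigma>\<^sup>2 * (normal_density \<mu> \<sigma> x * \<bar>x - \<mu>\<bar> ^ 1))"
    proof (rule AE_I2)
      fix x
      have "norm (h x) = \<bar>x - \<mu>\<bar> / \<sigma>\<^sup>2 * exp (- (x - \<mu>)\<^sup>2 / (2 * \<sigma>\<^sup>2))"
        unfolding h_def using sp by (simp add: abs_mult abs_minus_commute)
      also have "\<dots> = sqrt (2 * pi * \<sigma>\<^sup>2) / \<sigma>\<^sup>2 * (normal_density \<mu> \<sigma> x * \<bar>x - \<mu>\<bar> ^ 1)"
        unfolding normal_density_def using sp by simp
      finally show "norm (h x) \<le> norm (sqrt (2 * pi * \<sigma>\<^sup>2) / \<sigma>\<^sup>2 * (normal_density \<mu> \<sigma> x * \<bar>x - \<mu>\<bar> ^ 1))"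
        by simp
    qed
  qed
  have "(LBINT z=-\<infinity>..ereal t. h z) = H t - 0"
  proof (rule interval_integral_FTC_integrable)
    show "- \<infinity> < ereal t" by simp
    show "(H has_vector_derivative h x) (at x)" for x
      using der[of x] by (simp add: has_real_derivative_iff_has_vector_derivative)
    show "isCont h x" for x unfolding h_def using sp by (intro continuous_intros) auto
    show "set_integrable lborel (einterval (- \<infinity>) (ereal t)) h"
      unfolding set_integrable_def by (intro integrable_mult_indicator hint) auto
    show "((H \<circ> real_of_ereal) \<longlongrightarrow> 0) (at_right (- \<infinity>))"
      unfolding ereal_tendsto_simps1 H_def by (rule H_lim_bot[OF sp])
    have "isCont H t" unfolding H_def using sp by (intro continuous_intros) auto
    then have "(H \<longlongrightarrow> H t) (at t)" by (simp add: isCont_def)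
    then show "((H \<circ> real_of_ereal) \<longlongrightarrow> H t) (at_left (ereal t))"
      unfolding ereal_tendsto_simps1 filterlim_at_split by simp
  qed
  also have "(LBINT z=-\<infinity>..ereal t. h z) = (\<integral>z. indicator {..<t} z * h z \<partial>lborel)"
    by (simp add: interval_lebesgue_integral_def set_lebesgue_integral_def einterval_def lessThan_def)
  also have "\<dots> = (\<integral>z. indicator {..t} z * h z \<partial>lborel)"
    apply (rule integral_cong_AE)
      apply simp
     apply simp
    apply (rule AE_mp[OF AE_lborel_singleton[of t]])
    apply (rule AE_I2)
    apply (auto simp: indicator_def)
    done
  finally show ?thesis unfolding h_def H_def by simp
qed



lemma phi_le1: "phi x \<le> 1"
proof -
  have "exp (- x\<^sup>2 / 2) \<le> 1" by simp
  moreover have "1 / sqrt (2 * pi) \<le> 1" using pi_gt3 by (simp add: divide_le_eq)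
  ultimately show ?thesis unfolding std_normal_density_def
    by (metis exp_ge_zero less_eq_real_def mult_le_one zero_le_divide_1_iff zero_le_one real_sqrt_ge_zero)
qed

lemma phi_prod_eq:
  fixes \<rho> t z s :: real
  assumes s: "s > 0" and s2: "s\<^sup>2 = 1 - \<rho>\<^sup>2"
  shows "phi z * phi ((t - \<rho> * z) / s) * ((\<rho> * t - z) / s ^ 3)
    = exp (- t\<^sup>2 / 2) / (2 * pi * s) * ((\<rho> * t - z) / s\<^sup>2 * exp (- (z - \<rho> * t)\<^sup>2 / (2 * s\<^sup>2)))"
proof -
  have r1: "1 - \<rho>\<^sup>2 \<noteq> 0" using s s2 by auto
  have expo: "- z\<^sup>2 / 2 + - ((t - \<rho> * z) / s)\<^sup>2 / 2 = - t\<^sup>2 / 2 + - (z - \<rho> * t)\<^sup>2 / (2 * s\<^sup>2)"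
    unfolding power_divide s2 using r1 by (simp add: field_simps power2_eq_square)
  have "phi z * phi ((t - \<rho> * z) / s) = 1 / (2 * pi) * exp (- t\<^sup>2 / 2 + - (z - \<rho> * t)\<^sup>2 / (2 * s\<^sup>2))"
    unfolding std_normal_density_def expo[symmetric] exp_add
    by (simp add: real_sqrt_mult[symmetric])
  then have P: "phi z * phi ((t - \<rho> * z) / s) = exp (- t\<^sup>2 / 2) * exp (- (z - \<rho> * t)\<^sup>2 / (2 * s\<^sup>2)) / (2 * pi)"
    by (simp add: exp_add[symmetric])
  define EA where "EA = exp (- t\<^sup>2 / 2)"
  define EB where "EB = exp (- (z - \<rho> * t)\<^sup>2 / (2 * s\<^sup>2))"
  show ?thesis unfolding EA_def[symmetric] EB_def[symmetric] P[folded EA_def EB_def] using s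
    by (simp add: field_simps power2_eq_square power3_eq_cube)
qed

lemma local_interval:
  fixes \<rho>0 :: real
  assumes "-1 < \<rho>0" "\<rho>0 < 1"
  obtains a b \<delta> where "-1 < a" "a < \<rho>0" "\<rho>0 < b" "b < 1" "\<delta> > 0"
    "\<And>r. a < r \<Longrightarrow> r < b \<Longrightarrow> \<delta> \<le> 1 - r\<^sup>2"
proof -
  define m where "m = (1 + \<bar>\<rho>0\<bar>) / 2"
  have m: "0 \<le> m" "m < 1" using assms unfolding m_def by auto
  have d: "1 - m\<^sup>2 \<le> 1 - r\<^sup>2" if "(\<rho>0 - 1) / 2 < r" "r < (\<rho>0 + 1) / 2" for r
  proof -
    have "\<bar>r\<bar> \<le> m" using that unfolding m_def by auto
    then have "r\<^sup>2 \<le> m\<^sup>2" by (metis abs_le_square_iff abs_of_nonneg m(1))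
    then show "1 - m\<^sup>2 \<le> 1 - r\<^sup>2" by simp
  qed
  have "0 < 1 - m\<^sup>2" using m by (simp add: abs_square_less_1)
  then show ?thesis using that[of "(\<rho>0 - 1) / 2" "(\<rho>0 + 1) / 2" "1 - m\<^sup>2"] d assms by auto
qed

lemma Fr_deriv:
  assumes r0: "-1 < \<rho>0" "\<rho>0 < 1"
  shows "((\<lambda>r. Fr r t) has_real_derivative exp (- t\<^sup>2 / (1 + \<rho>0)) / (2 * pi * sqrt (1 - \<rho>0\<^sup>2))) (at \<rho>0)"
proof -
  obtain a b \<delta> where ab: "-1 < a" "a < \<rho>0" "\<rho>0 < b" "b < 1" and dp: "\<delta> > 0"
    and dle: "\<And>r. a < r \<Longrightarrow> r < b \<Longrightarrow> \<delta> \<le> 1 - r\<^sup>2"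
    using local_interval[OF r0] by blast
  define f where "f r z = phi z * indicator {..t} z * Phi ((t - r * z) / sqrt (1 - r\<^sup>2))" for r z
  define f' where "f' r z = phi z * indicator {..t} z * (phi ((t - r * z) / sqrt (1 - r\<^sup>2)) * ((r * t - z) / sqrt (1 - r\<^sup>2) ^ 3))" for r z
  define C where "C = 1 / sqrt \<delta> ^ 3"
  define g where "g z = C * \<bar>t\<bar> * phi z + C * (phi z * \<bar>z\<bar> ^ 1)" for z
  have "((\<lambda>r. \<integral>z. f r z \<partial>lborel) has_real_derivative (\<integral>z. f' \<rho>0 z \<partial>lborel)) (at \<rho>0)"
  proof (rule diff_under[OF ab(2,3)])
    show "integrable lborel (f r)" for r unfolding f_def by (rule Fr_integrand_integrable)
    show "((\<lambda>r. f r z) has_real_derivative f' r z) (at r)" if "a < r" "r < b" for z r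
    proof -
      have "-1 < r" "r < 1" using that ab by auto
      from DERIV_chain2[OF Phi_deriv deriv_arg[OF this, of t z]]
      show ?thesis unfolding f_def f'_def by (auto intro!: derivative_eq_intros)
    qed
    show "\<bar>f' r z\<bar> \<le> g z" if "a < r" "r < b" for z r
    proof -
      have r: "-1 < r" "r < 1" using that ab by auto
      have dl: "\<delta> \<le> 1 - r\<^sup>2" using dle that by auto
      have sq: "sqrt \<delta> ^ 3 \<le> sqrt (1 - r\<^sup>2) ^ 3" using dl dp by (intro power_mono) auto
      have sqp: "0 < sqrt \<delta> ^ 3" using dp by simp
      have num: "\<bar>r * t - z\<bar> \<le> \<bar>t\<bar> + \<bar>z\<bar>"
      proof -
        have "\<bar>r * t\<bar> \<le> \<bar>t\<bar>" using r by (simp add: abs_mult mult_left_le_one_le)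
        then show ?thesis by linarith
      qed
      have q: "\<bar>(r * t - z) / sqrt (1 - r\<^sup>2) ^ 3\<bar> \<le> (\<bar>t\<bar> + \<bar>z\<bar>) * C"
      proof -
        have "\<bar>(r * t - z) / sqrt (1 - r\<^sup>2) ^ 3\<bar> = \<bar>r * t - z\<bar> / sqrt (1 - r\<^sup>2) ^ 3"
        proof -
          have "r\<^sup>2 < 1" using r by (simp add: abs_square_less_1)
          then have "\<bar>sqrt (1 - r\<^sup>2)\<bar> = sqrt (1 - r\<^sup>2)" by simp
          then show ?thesis by (simp add: abs_divide power_abs)
        qed
        also have "\<dots> \<le> (\<bar>t\<bar> + \<bar>z\<bar>) / sqrt \<delta> ^ 3"
          by (rule frac_le[OF _ num sqp sq]) simp
        finally show ?thesis unfolding C_def by simp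
      qed
      have "\<bar>f' r z\<bar> = phi z * indicator {..t} z * (phi ((t - r * z) / sqrt (1 - r\<^sup>2)) * \<bar>(r * t - z) / sqrt (1 - r\<^sup>2) ^ 3\<bar>)"
        unfolding f'_def by (simp add: abs_mult)
      also have "\<dots> \<le> phi z * 1 * (1 * ((\<bar>t\<bar> + \<bar>z\<bar>) * C))"
        by (intro mult_mono q phi_le1) (auto split: split_indicator)
      also have "\<dots> = g z" unfolding g_def by (simp add: algebra_simps)
      finally show ?thesis .
    qed
    show "integrable lborel g"
      unfolding g_def using integrable_std_normal_moment_abs[of 1]
      by (intro Bochner_Integration.integrable_add integrable_mult_right) auto
    show "f' \<rho>0 \<in> borel_measurable lborel" unfolding f'_def by measurable
  qed
  moreover have "(\<lambda>r. \<integral>z. f r z \<partial>lborel) = (\<lambda>r. Fr r t)" unfolding f_def Fr_def by simp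
  moreover have "(\<integral>z. f' \<rho>0 z \<partial>lborel) = exp (- t\<^sup>2 / (1 + \<rho>0)) / (2 * pi * sqrt (1 - \<rho>0\<^sup>2))"
  proof -
    define s where "s = sqrt (1 - \<rho>0\<^sup>2)"
    have s: "s > 0" unfolding s_def using r0 by (simp add: abs_square_less_1)
    have s2: "s\<^sup>2 = 1 - \<rho>0\<^sup>2" unfolding s_def using r0 by (simp add: abs_square_less_1 less_imp_le)
    have "(\<integral>z. f' \<rho>0 z \<partial>lborel) = (\<integral>z. exp (- t\<^sup>2 / 2) / (2 * pi * s) * (indicator {..t} z * ((\<rho>0 * t - z) / s\<^sup>2 * exp (- (z - \<rho>0 * t)\<^sup>2 / (2 * s\<^sup>2)))) \<partial>lborel)"
    proof (intro Bochner_Integration.integral_cong refl)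
      fix z
      have "f' \<rho>0 z = indicator {..t} z * (phi z * phi ((t - \<rho>0 * z) / s) * ((\<rho>0 * t - z) / s ^ 3))"
        unfolding f'_def s_def by (simp add: mult_ac)
      also have "\<dots> = indicator {..t} z * (exp (- t\<^sup>2 / 2) / (2 * pi * s) * ((\<rho>0 * t - z) / s\<^sup>2 * exp (- (z - \<rho>0 * t)\<^sup>2 / (2 * s\<^sup>2))))"
        by (simp only: phi_prod_eq[OF s s2])
      finally show "f' \<rho>0 z = exp (- t\<^sup>2 / 2) / (2 * pi * s) * (indicator {..t} z * ((\<rho>0 * t - z) / s\<^sup>2 * exp (- (z - \<rho>0 * t)\<^sup>2 / (2 * s\<^sup>2))))"
        by (simp only: mult_ac)
    qed
    also have "\<dots> = exp (- t\<^sup>2 / 2) / (2 * pi * s) * exp (- (t - \<rho>0 * t)\<^sup>2 / (2 * s\<^sup>2))"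
      by (simp only: integral_mult_right_zero H_FTC[OF s])
    also have "\<dots> = exp (- t\<^sup>2 / (1 + \<rho>0)) / (2 * pi * s)"
    proof -
      have r1: "1 + \<rho>0 \<noteq> 0" "1 - \<rho>0 \<noteq> 0" using r0 by auto
      have "- t\<^sup>2 / 2 + - (t - \<rho>0 * t)\<^sup>2 / (2 * s\<^sup>2) = - t\<^sup>2 / (1 + \<rho>0)"
      proof -
        have f: "1 - \<rho>0\<^sup>2 = (1 - \<rho>0) * (1 + \<rho>0)" by (simp add: power2_eq_square algebra_simps)
        have a: "(t - \<rho>0 * t)\<^sup>2 = (t\<^sup>2 * (1 - \<rho>0)) * (1 - \<rho>0)" by (simp add: power2_eq_square algebra_simps)
        have b: "2 * ((1 - \<rho>0) * (1 + \<rho>0)) = (2 * (1 + \<rho>0)) * (1 - \<rho>0)" by simp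
        have c: "(t\<^sup>2 * (1 - \<rho>0)) * (1 - \<rho>0) / ((2 * (1 + \<rho>0)) * (1 - \<rho>0)) = t\<^sup>2 * (1 - \<rho>0) / (2 * (1 + \<rho>0))"
          by (metis nonzero_mult_divide_mult_cancel_right r1(2))
        have d: "- t\<^sup>2 / 2 + - (t\<^sup>2 * (1 - \<rho>0) / (2 * (1 + \<rho>0))) = - t\<^sup>2 / (1 + \<rho>0)"
          using r1 by (simp add: field_simps)
        show ?thesis unfolding s2 f a b c using d by simp
      qed
      then show ?thesis by (simp add: exp_add[symmetric])
    qed
    finally show ?thesis unfolding s_def .
  qed
  ultimately show ?thesis by simp
qed



lemma int_pos:
  fixes f :: "real \<Rightarrow> real"
  assumes int: "integrable lborel f" and nn: "\<And>x. 0 \<le> f x"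
    and pos: "\<And>x. a \<le> x \<Longrightarrow> x \<le> b \<Longrightarrow> 0 < f x" and ab: "a < b"
  shows "0 < (\<integral>x. f x \<partial>lborel)"
proof -
  have ge: "0 \<le> (\<integral>x. f x \<partial>lborel)" using nn by (simp add: integral_nonneg_AE)
  have "(\<integral>x. f x \<partial>lborel) \<noteq> 0"
  proof
    assume "(\<integral>x. f x \<partial>lborel) = 0"
    then have "AE x in lborel. f x = 0" using integral_nonneg_eq_0_iff_AE[OF int] nn by simp
    then have "AE x in lborel. x \<notin> {a..b}" by (rule AE_mp) (auto intro!: AE_I2 dest: pos)
    then have "emeasure lborel {a..b} = 0"
      by (subst (asm) AE_iff_measurable[of "{a..b}"]) auto
    then show False using ab by simp
  qed
  then show ?thesis using ge by simp
qed

definition Kf :: "real \<Rightarrow> real \<Rightarrow> real" where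
  "Kf l r = (\<integral>t. Wf l t * exp (- t\<^sup>2 / (1 + r)) \<partial>lborel)"

definition Kd :: "real \<Rightarrow> real \<Rightarrow> real" where
  "Kd l r = (\<integral>t. Wf l t * (exp (- t\<^sup>2 / (1 + r)) * (t\<^sup>2 / (1 + r)\<^sup>2)) \<partial>lborel)"

lemma Wexp_integrable:
  assumes l: "l > 0" and r: "-1 < r"
  shows "integrable lborel (\<lambda>t. Wf l t * exp (- t\<^sup>2 / (1 + r)))"
proof (rule Bochner_Integration.integrable_bound[OF Wf_integrable[OF l]])
  have rp: "0 < 1 + r" using r by simp
  show "(\<lambda>t. Wf l t * exp (- t\<^sup>2 / (1 + r))) \<in> borel_measurable lborel" by measurable
  show "AE x in lborel. norm (Wf l x * exp (- x\<^sup>2 / (1 + r))) \<le> norm (Wf l x)"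
  proof (rule AE_I2)
    fix x
    have "0 \<le> x\<^sup>2 / (1 + r)" using rp by simp
    then have "exp (- x\<^sup>2 / (1 + r)) \<le> 1" by simp
    then show "norm (Wf l x * exp (- x\<^sup>2 / (1 + r))) \<le> norm (Wf l x)"
      using Wf_nonneg[OF l, of x] by (simp add: abs_mult mult_left_le)
  qed
qed

lemma Kf_pos:
  assumes l: "l > 0" and r: "-1 < r"
  shows "0 < Kf l r"
  unfolding Kf_def
proof (rule int_pos[OF Wexp_integrable[OF l r], of 0 1])
  show "0 \<le> Wf l x * exp (- x\<^sup>2 / (1 + r))" for x using Wf_nonneg[OF l] by simp
  show "0 < Wf l x * exp (- x\<^sup>2 / (1 + r))" if "0 \<le> x" "x \<le> 1" for x
    using that l unfolding Wf_def by (auto simp: indicator_def)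
qed simp

lemma xexp_le: "(x::real) \<ge> 0 \<Longrightarrow> exp (- x) * x \<le> 1"
proof -
  assume "x \<ge> 0"
  have "x \<le> exp x" using exp_ge_add_one_self[of x] by linarith
  then show ?thesis by (simp add: exp_minus field_simps)
qed

lemma Kd_integrand_bound:
  assumes l: "l > 0" and r: "-1 < r"
  shows "\<bar>Wf l t * (exp (- t\<^sup>2 / (1 + r)) * (t\<^sup>2 / (1 + r)\<^sup>2))\<bar> \<le> Wf l t * (1 / (1 + r))"
proof -
  have rp: "0 < 1 + r" using r by simp
  have "exp (- t\<^sup>2 / (1 + r)) * (t\<^sup>2 / (1 + r)\<^sup>2) = (exp (- (t\<^sup>2 / (1 + r))) * (t\<^sup>2 / (1 + r))) * (1 / (1 + r))"
    by (simp add: power2_eq_square)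
  also have "\<dots> \<le> 1 * (1 / (1 + r))"
    using rp by (intro mult_right_mono xexp_le) auto
  finally have e: "exp (- t\<^sup>2 / (1 + r)) * (t\<^sup>2 / (1 + r)\<^sup>2) \<le> 1 * (1 / (1 + r))" .
  have nn: "0 \<le> Wf l t * (exp (- t\<^sup>2 / (1 + r)) * (t\<^sup>2 / (1 + r)\<^sup>2))" by (simp add: Wf_nonneg[OF l])
  have "Wf l t * (exp (- t\<^sup>2 / (1 + r)) * (t\<^sup>2 / (1 + r)\<^sup>2)) \<le> Wf l t * (1 * (1 / (1 + r)))"
    by (rule mult_left_mono[OF e Wf_nonneg[OF l]])
  then show ?thesis using nn by (simp only: abs_of_nonneg mult_1_left)
qed

lemma Kd_integrable:
  assumes l: "l > 0" and r: "-1 < r"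
  shows "integrable lborel (\<lambda>t. Wf l t * (exp (- t\<^sup>2 / (1 + r)) * (t\<^sup>2 / (1 + r)\<^sup>2)))"
proof (rule Bochner_Integration.integrable_bound[where f = "\<lambda>t. Wf l t * (1 / (1 + r))"])
  have rp: "0 < 1 + r" using r by simp
  show "integrable lborel (\<lambda>t. Wf l t * (1 / (1 + r)))" using Wf_integrable[OF l] by simp
  show "(\<lambda>t. Wf l t * (exp (- t\<^sup>2 / (1 + r)) * (t\<^sup>2 / (1 + r)\<^sup>2))) \<in> borel_measurable lborel" by measurable
  show "AE x in lborel. norm (Wf l x * (exp (- x\<^sup>2 / (1 + r)) * (x\<^sup>2 / (1 + r)\<^sup>2))) \<le> norm (Wf l x * (1 / (1 + r)))"
  proof (rule AE_I2)
    fix x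
    have "0 \<le> Wf l x * (1 / (1 + r))" using rp Wf_nonneg[OF l, of x] by simp
    then show "norm (Wf l x * (exp (- x\<^sup>2 / (1 + r)) * (x\<^sup>2 / (1 + r)\<^sup>2))) \<le> norm (Wf l x * (1 / (1 + r)))"
      using Kd_integrand_bound[OF l r, of x] by (simp only: real_norm_def abs_of_nonneg)
  qed
qed

lemma Kd_pos:
  assumes l: "l > 0" and r: "-1 < r"
  shows "0 < Kd l r"
  unfolding Kd_def
proof (rule int_pos[OF Kd_integrable[OF l r], of 1 2])
  have rp: "0 < 1 + r" using r by simp
  show "0 \<le> Wf l x * (exp (- x\<^sup>2 / (1 + r)) * (x\<^sup>2 / (1 + r)\<^sup>2))" for x
    using Wf_nonneg[OF l] by simp
  show "0 < Wf l x * (exp (- x\<^sup>2 / (1 + r)) * (x\<^sup>2 / (1 + r)\<^sup>2))" if "1 \<le> x" "x \<le> 2" for x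
    using that l rp unfolding Wf_def by (auto simp: indicator_def)
qed simp

lemma Kf_deriv:
  assumes l: "l > 0" and r0: "-1 < r0"
  shows "(Kf l has_real_derivative Kd l r0) (at r0)"
proof -
  define a where "a = (r0 - 1) / 2"
  have a: "-1 < a" "a < r0" using r0 unfolding a_def by auto
  have "((\<lambda>r. \<integral>t. Wf l t * exp (- t\<^sup>2 / (1 + r)) \<partial>lborel) has_real_derivative
      (\<integral>t. Wf l t * (exp (- t\<^sup>2 / (1 + r0)) * (t\<^sup>2 / (1 + r0)\<^sup>2)) \<partial>lborel)) (at r0)"
  proof (rule diff_under[where a = a and b = "r0 + 1" and g = "\<lambda>t. Wf l t * (1 / (1 + a))"])
    show "a < r0" "r0 < r0 + 1" using a by auto
    show "integrable lborel (\<lambda>t. Wf l t * exp (- t\<^sup>2 / (1 + r)))" if "a < r" "r < r0 + 1" for r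
      using Wexp_integrable[OF l] that a by simp
    show "((\<lambda>r. Wf l t * exp (- t\<^sup>2 / (1 + r))) has_real_derivative Wf l t * (exp (- t\<^sup>2 / (1 + r)) * (t\<^sup>2 / (1 + r)\<^sup>2))) (at r)"
      if "a < r" "r < r0 + 1" for t r
    proof -
      have rp: "1 + r \<noteq> 0" using that a by simp
      show ?thesis
        using rp by (auto intro!: derivative_eq_intros simp: power2_eq_square field_simps)
    qed
    show "\<bar>Wf l t * (exp (- t\<^sup>2 / (1 + r)) * (t\<^sup>2 / (1 + r)\<^sup>2))\<bar> \<le> Wf l t * (1 / (1 + a))"
      if "a < r" "r < r0 + 1" for t r
    proof -
      have "\<bar>Wf l t * (exp (- t\<^sup>2 / (1 + r)) * (t\<^sup>2 / (1 + r)\<^sup>2))\<bar> \<le> Wf l t * (1 / (1 + r))"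
        using Kd_integrand_bound[OF l, of r t] that a by simp
      also have "\<dots> \<le> Wf l t * (1 / (1 + a))"
        using that a Wf_nonneg[OF l, of t] by (intro mult_left_mono divide_left_mono) auto
      finally show ?thesis .
    qed
    show "integrable lborel (\<lambda>t. Wf l t * (1 / (1 + a)))" using Wf_integrable[OF l] by simp
    show "(\<lambda>t. Wf l t * (exp (- t\<^sup>2 / (1 + r0)) * (t\<^sup>2 / (1 + r0)\<^sup>2))) \<in> borel_measurable lborel" by measurable
  qed
  then show ?thesis unfolding Kf_def[abs_def] Kd_def by simp
qed

lemma Kf_mono:
  assumes l: "l > 0" and r: "0 \<le> r"
  shows "Kf l 0 \<le> Kf l r"
  unfolding Kf_def
proof (rule integral_mono[OF Wexp_integrable[OF l] Wexp_integrable[OF l]])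
  fix t
  have "- t\<^sup>2 \<le> - t\<^sup>2 / (1 + r)" using r by (simp add: field_simps mult_left_mono)
  then show "Wf l t * exp (- t\<^sup>2 / (1 + 0)) \<le> Wf l t * exp (- t\<^sup>2 / (1 + r))"
    using Wf_nonneg[OF l, of t] by (intro mult_left_mono) auto
qed (use r in auto)



definition Dh :: "real \<Rightarrow> real \<Rightarrow> real" where
  "Dh l r = Kf l r / (2 * pi * sqrt (1 - r\<^sup>2))"

lemma h_deriv:
  assumes l: "l > 0" and r0: "-1 < \<rho>0" "\<rho>0 < 1"
  shows "(hfun l has_real_derivative Dh l \<rho>0) (at \<rho>0)"
proof -
  obtain a b \<delta> where ab: "-1 < a" "a < \<rho>0" "\<rho>0 < b" "b < 1" and dp: "\<delta> > 0"
    and dle: "\<And>r. a < r \<Longrightarrow> r < b \<Longrightarrow> \<delta> \<le> 1 - r\<^sup>2"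
    using local_interval[OF r0] by blast
  define C where "C = 1 / (2 * pi * sqrt \<delta>)"
  have "((\<lambda>r. \<integral>t. Wf l t * Fr r t \<partial>lborel) has_real_derivative
      (\<integral>t. Wf l t * (exp (- t\<^sup>2 / (1 + \<rho>0)) / (2 * pi * sqrt (1 - \<rho>0\<^sup>2))) \<partial>lborel)) (at \<rho>0)"
  proof (rule diff_under[OF ab(2,3), where g = "\<lambda>t. Wf l t * C"])
    show "integrable lborel (\<lambda>t. Wf l t * Fr r t)" for r by (rule WFr_integrable[OF l])
    show "((\<lambda>r. Wf l t * Fr r t) has_real_derivative Wf l t * (exp (- t\<^sup>2 / (1 + r)) / (2 * pi * sqrt (1 - r\<^sup>2)))) (at r)"
      if "a < r" "r < b" for t r
      using that ab by (intro DERIV_cmult Fr_deriv) auto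
    show "\<bar>Wf l t * (exp (- t\<^sup>2 / (1 + r)) / (2 * pi * sqrt (1 - r\<^sup>2)))\<bar> \<le> Wf l t * C"
      if "a < r" "r < b" for t r
    proof -
      have rp: "0 < 1 + r" using that ab by simp
      have dl: "\<delta> \<le> 1 - r\<^sup>2" using dle that by auto
      have e: "exp (- t\<^sup>2 / (1 + r)) \<le> 1" using rp by simp
      have sq: "sqrt \<delta> \<le> sqrt (1 - r\<^sup>2)" using dl by simp
      have "exp (- t\<^sup>2 / (1 + r)) / (2 * pi * sqrt (1 - r\<^sup>2)) \<le> 1 / (2 * pi * sqrt \<delta>)"
        by (rule frac_le) (use e sq dp in auto)
      then have m: "Wf l t * (exp (- t\<^sup>2 / (1 + r)) / (2 * pi * sqrt (1 - r\<^sup>2))) \<le> Wf l t * C"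
        unfolding C_def by (rule mult_left_mono[OF _ Wf_nonneg[OF l]])
      have "0 < sqrt (1 - r\<^sup>2)" using dl dp by simp
      then have "0 \<le> Wf l t * (exp (- t\<^sup>2 / (1 + r)) / (2 * pi * sqrt (1 - r\<^sup>2)))"
        using Wf_nonneg[OF l, of t] by simp
      then show ?thesis using m by (simp only: abs_of_nonneg)
    qed
    show "integrable lborel (\<lambda>t. Wf l t * C)" using Wf_integrable[OF l] by simp
    show "(\<lambda>t. Wf l t * (exp (- t\<^sup>2 / (1 + \<rho>0)) / (2 * pi * sqrt (1 - \<rho>0\<^sup>2)))) \<in> borel_measurable lborel"
      by measurable
  qed
  moreover have "(\<integral>t. Wf l t * (exp (- t\<^sup>2 / (1 + \<rho>0)) / (2 * pi * sqrt (1 - \<rho>0\<^sup>2))) \<partial>lborel) = Dh l \<rho>0"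
    unfolding Dh_def Kf_def by (simp add: integral_divide_zero[symmetric] del: integral_divide_zero)
  ultimately have d: "((\<lambda>r. \<integral>t. Wf l t * Fr r t \<partial>lborel) has_real_derivative Dh l \<rho>0) (at \<rho>0)" by simp
  show ?thesis
    by (rule has_field_derivative_transform_within_open[OF d, of "{-1<..<1}"])
       (use r0 hfun_repr[OF l] in auto)
qed

definition Dp :: "real \<Rightarrow> real \<Rightarrow> real" where
  "Dp l r = Kd l r / (2 * pi * sqrt (1 - r\<^sup>2)) + Kf l r * r / (2 * pi * sqrt (1 - r\<^sup>2) ^ 3)"

lemma sqrt_deriv:
  assumes r: "-1 < r" "r < 1"
  shows "((\<lambda>r. sqrt (1 - r\<^sup>2)) has_real_derivative - r / sqrt (1 - r\<^sup>2)) (at r)"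
proof -
  have p: "0 < 1 - r\<^sup>2" using r by (simp add: abs_square_less_1)
  have i: "((\<lambda>r. 1 - r\<^sup>2) has_real_derivative - (2 * r)) (at r)"
    by (auto intro!: derivative_eq_intros)
  have "((\<lambda>r. sqrt (1 - r\<^sup>2)) has_real_derivative inverse (sqrt (1 - r\<^sup>2)) / 2 * - (2 * r)) (at r)"
    by (rule DERIV_chain2[OF DERIV_real_sqrt[OF p] i])
  moreover have "inverse (sqrt (1 - r\<^sup>2)) / 2 * - (2 * r) = - r / sqrt (1 - r\<^sup>2)"
    by (simp add: field_simps)
  ultimately show ?thesis by simp
qed

lemma D_deriv:
  assumes l: "l > 0" and r: "-1 < r" "r < 1"
  shows "(Dh l has_real_derivative Dp l r) (at r)"
proof -
  define s where "s = sqrt (1 - r\<^sup>2)"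
  have sp: "s > 0" unfolding s_def using r by (simp add: abs_square_less_1)
  have d2: "((\<lambda>r. 2 * pi * sqrt (1 - r\<^sup>2)) has_real_derivative 2 * pi * (- r / s)) (at r)"
    unfolding s_def by (intro DERIV_cmult sqrt_deriv r)
  have "(Dh l has_real_derivative (Kd l r * (2 * pi * s) - Kf l r * (2 * pi * (- r / s))) / ((2 * pi * s) * (2 * pi * s))) (at r)"
    unfolding Dh_def[abs_def] s_def
    by (rule DERIV_divide[OF Kf_deriv[OF l r(1)] d2[unfolded s_def]]) (use sp[unfolded s_def] in simp)
  moreover have "(Kd l r * (2 * pi * s) - Kf l r * (2 * pi * (- r / s))) / ((2 * pi * s) * (2 * pi * s)) = Dp l r"
    unfolding Dp_def s_def[symmetric] using sp by (simp add: field_simps power3_eq_cube)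
  ultimately show ?thesis by simp
qed

lemma Dh_pos: "l > 0 \<Longrightarrow> -1 < r \<Longrightarrow> r < 1 \<Longrightarrow> 0 < Dh l r"
  unfolding Dh_def using Kf_pos[of l r] by (simp add: abs_square_less_1)

lemma Dp_pos: "l > 0 \<Longrightarrow> 0 \<le> r \<Longrightarrow> r < 1 \<Longrightarrow> 0 < Dp l r"
proof -
  assume l: "l > 0" and r: "0 \<le> r" "r < 1"
  have sp: "0 < sqrt (1 - r\<^sup>2)" using r by (simp add: abs_square_less_1)
  have "0 < Kd l r / (2 * pi * sqrt (1 - r\<^sup>2))" using Kd_pos[OF l, of r] r sp by simp
  moreover have "0 \<le> Kf l r * r / (2 * pi * sqrt (1 - r\<^sup>2) ^ 3)"
    using Kf_pos[OF l, of r] r sp by simp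
  ultimately show ?thesis unfolding Dp_def by simp
qed

lemma lim_aux:
  assumes c: "(c::real) > 0"
  shows "LIM x at_left 1. c / (2 * pi * sqrt (1 - x\<^sup>2)) :> at_top"
  using c by real_asymp

theorem lemma7:
  fixes l :: real
  assumes "l > 0"
  shows "(\<forall>\<rho>\<in>{-1<..<1}. hfun l differentiable (at \<rho>) \<and> deriv (hfun l) \<rho> > 0)
         \<and> filterlim (deriv (hfun l)) at_top (at_left 1)
         \<and> (\<forall>\<rho>\<in>{0..<1}. deriv (hfun l) differentiable (at \<rho>) \<and> deriv (deriv (hfun l)) \<rho> > 0)"
proof (intro conjI ballI)
  have l: "l > 0" by (rule assms)
  have dh: "deriv (hfun l) r = Dh l r" if "r \<in> {-1<..<1}" for r
    using h_deriv[OF l] that by (auto intro: DERIV_imp_deriv)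
  fix \<rho> :: real
  assume r: "\<rho> \<in> {-1<..<1}"
  show "hfun l differentiable (at \<rho>)"
    using h_deriv[OF l] r by (auto simp: real_differentiable_def)
  show "deriv (hfun l) \<rho> > 0" using dh[OF r] Dh_pos[OF l] r by simp
next
  have l: "l > 0" by (rule assms)
  have dh: "deriv (hfun l) r = Dh l r" if "r \<in> {-1<..<1}" for r
    using h_deriv[OF l] that by (auto intro: DERIV_imp_deriv)
  have lim: "LIM x at_left 1. Kf l 0 / (2 * pi * sqrt (1 - x\<^sup>2)) :> at_top"
    by (rule lim_aux[OF Kf_pos[OF l]]) simp
  show "filterlim (deriv (hfun l)) at_top (at_left 1)"
  proof (rule filterlim_at_top_mono[OF lim])
    show "\<forall>\<^sub>F x in at_left 1. Kf l 0 / (2 * pi * sqrt (1 - x\<^sup>2)) \<le> deriv (hfun l) x"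
      using eventually_at_left_real[of 0 "1::real"]
    proof (rule eventually_mono)
      fix x :: real assume x: "x \<in> {0<..<1}"
      have sp: "0 < sqrt (1 - x\<^sup>2)" using x by (simp add: abs_square_less_1)
      have "Kf l 0 / (2 * pi * sqrt (1 - x\<^sup>2)) \<le> Kf l x / (2 * pi * sqrt (1 - x\<^sup>2))"
        using Kf_mono[OF l, of x] x sp by (intro divide_right_mono) auto
      then show "Kf l 0 / (2 * pi * sqrt (1 - x\<^sup>2)) \<le> deriv (hfun l) x"
        using dh[of x] x unfolding Dh_def by simp
    qed simp
  qed
next
  have l: "l > 0" by (rule assms)
  have dh: "deriv (hfun l) r = Dh l r" if "r \<in> {-1<..<1}" for r
    using h_deriv[OF l] that by (auto intro: DERIV_imp_deriv)
  fix \<rho> :: real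
  assume r: "\<rho> \<in> {0..<1}"
  have d: "(deriv (hfun l) has_real_derivative Dp l \<rho>) (at \<rho>)"
    by (rule has_field_derivative_transform_within_open[OF D_deriv[OF l], of _ "{-1<..<1}"])
       (use r dh in auto)
  show "deriv (hfun l) differentiable (at \<rho>)"
    using d by (auto simp: real_differentiable_def)
  show "deriv (deriv (hfun l)) \<rho> > 0"
    using DERIV_imp_deriv[OF d] Dp_pos[OF l] r by simp
qed


end
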